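(* Let $u_0\in L^\infty(\mathbb{R}^d)\cap\mathrm{BAP}(\mathbb{R}^d)$ and let $u$ be the entropy solution of $\partial_t u+\nabla\cdot\mathbf{f}(u)=\sum_{i,j}\partial^2_{x_ix_j}\mathbf{A}_{ij}(u)$, $u(0,\cdot)=u_0$. Then the set $$\Lambda_u=\{\lambda\in\mathbb{R}^d:\ \mathrm{Me}\big(e^{-2\pi i\lambda\cdot(\cdot)}u(t,\cdot)\big)\neq0\ \text{for some } t\ge0\}$$ is at most countable.
   Context: Standing setting: $\mathbf{f}:\mathbb{R}\to\mathbb{R}^d$ smooth; $\mathbf{A}(u)=(\mathbf{A}_{ij}(u))$ smooth symmetric with derivative $A(u)=(a_{ij}(u))$ nonnegative definite; smooth $\sigma_{ik}$ with $a_{ij}=\sum_k\sigma_{ik}\sigma_{jk}$; $\beta_{ik}(u)=\int^u\sigma_{ik}$; $I_R=\{x:\max_i|x_i|\le R/2\}$. The entropy solution (which exists, is unique, and satisfies $u\in C([0,\infty);\mathrm{BAP}(\mathbb{R}^d))$ for such $u_0$) is the $u\in L^\infty((0,\infty)\times\mathbb{R}^d)$ with: (i) $\sum_i\partial_{x_i}\beta_{ik}(u)\in L^2((0,\infty)\times I_R)$; (ii) chain rule $\sum_i\partial_{x_i}\beta^\psi_{ik}(u)=\psi(u)\sum_i\partial_{x_i}\beta_{ik}(u)$ for $\psi\in C(\mathbb{R})$, $(\beta^\psi_{ik})'=\psi\beta'_{ik}$; (iii) for all convex $C^2$ $\eta$, with $\mathbf{q}'=\eta'\mathbf{f}'$,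 $r'_{ij}=\eta'a_{ij}$, $\partial_t\eta(u)+\nabla\cdot\mathbf{q}(u)-\sum\partial^2_{x_ix_j}r_{ij}(u)\le-\eta''(u)\sum_k(\sum_i\partial_{x_i}\beta_{ik}(u))^2$ in distributions; (iv) $\int_{I_R}|u(t)-u_0|dx\to0$ as $t\to0^+$. $\mathrm{BAP}(\mathbb{R}^d)$: completion of trigonometric polynomials under $N_1(g)=\limsup_{R\to\infty}R^{-d}\int_{I_R}|g|dx$; for $g\in\mathrm{BAP}(\mathbb{R}^d)$, $\mathrm{Me}(g)=\lim_{R\to\infty}R^{-d}\int_{I_R}g\,dx$ (which exists). *)

theory Defs
  imports "HOL-Analysis.Analysis"
begin

fun Cn :: "nat \<Rightarrow> ('a::real_normed_vector \<Rightarrow> 'b::real_normed_vector) \<Rightarrow> bool" where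
  "Cn 0 g = continuous_on UNIV g"
| "Cn (Suc n) g = (\<exists>g'. (\<forall>x. (g has_derivative g' x) (at x)) \<and> (\<forall>h. Cn n (\<lambda>x. g' x h)))"

definition smooth :: "('a::real_normed_vector \<Rightarrow> 'b::real_normed_vector) \<Rightarrow> bool" where
  "smooth g \<longleftrightarrow> (\<forall>n. Cn n g)"

definition cube :: "real \<Rightarrow> (real^'d) set" where
  "cube R = {x. \<forall>i. \<bar>x $ i\<bar> \<le> R / 2}"

definition N1 :: "(real^'d \<Rightarrow> complex) \<Rightarrow> ereal" where
  "N1 g = Limsup at_top (\<lambda>R::real. ereal (inverse (R ^ CARD('d)) *
            (LINT x : cube R | lebesgue. norm (g x))))"

definition trig_poly :: "(real^'d \<Rightarrow> complex) \<Rightarrow> bool" where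
  "trig_poly p \<longleftrightarrow> (\<exists>L c. finite L \<and>
      p = (\<lambda>x. \<Sum>l\<in>L. c l * exp (2 * pi * \<i> * complex_of_real (l \<bullet> x))))"

definition BAP :: "(real^'d \<Rightarrow> complex) set" where
  "BAP = {g. (\<forall>R. set_integrable lebesgue (cube R) g) \<and>
             (\<forall>e>0. \<exists>p. trig_poly p \<and> N1 (\<lambda>x. g x - p x) < ereal e)}"

definition Me :: "(real^'d \<Rightarrow> complex) \<Rightarrow> complex" where
  "Me g = Lim at_top (\<lambda>R::real. inverse (complex_of_real (R ^ CARD('d))) *
            (LINT x : cube R | lebesgue. g x))"

definition dt :: "(real \<times> (real^'d) \<Rightarrow> real) \<Rightarrow> real \<times> (real^'d) \<Rightarrow> real" where
  "dt \<phi> p = deriv (\<lambda>s. \<phi> (fst p + s, snd p)) 0"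

definition dx :: "'d \<Rightarrow> (real \<times> (real^'d) \<Rightarrow> real) \<Rightarrow> real \<times> (real^'d) \<Rightarrow> real" where
  "dx i \<phi> p = deriv (\<lambda>s. \<phi> (fst p, snd p + s *\<^sub>R axis i 1)) 0"

definition test_fun :: "(real \<times> (real^'d) \<Rightarrow> real) \<Rightarrow> bool" where
  "test_fun \<phi> \<longleftrightarrow> smooth \<phi> \<and> compact (closure (support_on UNIV \<phi>)) \<and>
     closure (support_on UNIV \<phi>) \<subseteq> {0<..} \<times> UNIV"

text \<open>
  f: flux, A: diffusion matrix, sig: sigma_{ik}, beta: beta_{ik} (antiderivatives of sigma_{ik}).
  g k stands for the L^2 function sum_i d/dx_i beta_{ik}(u).\<close>
definition entropy_solution ::
  "(real \<Rightarrow> real^'d) \<Rightarrow> (real \<Rightarrow> real^'d^'d) \<Rightarrow> ('d \<Rightarrow> 'k::finite \<Rightarrow> real \<Rightarrow> real) \<Rightarrow>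
   ('d \<Rightarrow> 'k \<Rightarrow> real \<Rightarrow> real) \<Rightarrow> (real^'d \<Rightarrow> real) \<Rightarrow> (real \<Rightarrow> real^'d \<Rightarrow> real) \<Rightarrow> bool" where
  "entropy_solution f A sig beta u0 u \<longleftrightarrow>
     (\<lambda>p. u (fst p) (snd p)) \<in> borel_measurable (lebesgue :: (real \<times> (real^'d)) measure) \<and>
     (\<exists>M. AE p in lebesgue. p \<in> {0<..} \<times> UNIV \<longrightarrow> \<bar>u (fst p) (snd p)\<bar> \<le> M) \<and>
     (\<exists>g :: 'k \<Rightarrow> real \<times> (real^'d) \<Rightarrow> real.
        \<comment> \<open>(i) sum_i d_{x_i} beta_{ik}(u) = g k in distributions, and g k in L^2((0,inf) x I_R)\<close>
        (\<forall>k R. set_integrable lebesgue ({0<..} \<times> cube R) (\<lambda>p. (g k p)\<^sup>2)) \<and>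
        (\<forall>k. g k \<in> borel_measurable lebesgue) \<and>
        (\<forall>k \<phi>. test_fun \<phi> \<longrightarrow>
           (LINT p | lebesgue. g k p * \<phi> p) =
           - (LINT p | lebesgue. (\<Sum>i\<in>UNIV. beta i k (u (fst p) (snd p)) * dx i \<phi> p))) \<and>
        \<comment> \<open>(ii) chain rule\<close>
        (\<forall>\<psi> bpsi. continuous_on UNIV \<psi> \<longrightarrow>
           (\<forall>i k s. (bpsi i k has_real_derivative \<psi> s * sig i k s) (at s)) \<longrightarrow>
           (\<forall>k \<phi>. test_fun \<phi> \<longrightarrow>
              (LINT p | lebesgue. \<psi> (u (fst p) (snd p)) * g k p * \<phi> p) =
              - (LINT p | lebesgue. (\<Sum>i\<in>UNIV. bpsi i k (u (fst p) (snd p)) * dx i \<phi> p)))) \<and>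
        \<comment> \<open>(iii) entropy inequalities\<close>
        (\<forall>\<eta> \<eta>' \<eta>'' q r.
           convex_on UNIV \<eta> \<longrightarrow>
           (\<forall>s. (\<eta> has_real_derivative \<eta>' s) (at s)) \<longrightarrow>
           (\<forall>s. (\<eta>' has_real_derivative \<eta>'' s) (at s)) \<longrightarrow>
           continuous_on UNIV \<eta>'' \<longrightarrow>
           (\<forall>s. (q has_vector_derivative (\<eta>' s *\<^sub>R vector_derivative f (at s))) (at s)) \<longrightarrow>
           (\<forall>i j s. (r i j has_real_derivative (\<eta>' s * (vector_derivative A (at s) $ i $ j))) (at s)) \<longrightarrow>
           (\<forall>\<phi>. test_fun \<phi> \<longrightarrow> (\<forall>p. \<phi> p \<ge> 0) \<longrightarrow>
              (LINT p | lebesgue. \<eta>'' (u (fst p) (snd p)) * (\<Sum>k\<in>UNIV. (g k p)\<^sup>2) * \<phi> p)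
              \<le> (LINT p | lebesgue.
                    \<eta> (u (fst p) (snd p)) * dt \<phi> p
                    + (\<Sum>i\<in>UNIV. q (u (fst p) (snd p)) $ i * dx i \<phi> p)
                    + (\<Sum>i\<in>UNIV. \<Sum>j\<in>UNIV. r i j (u (fst p) (snd p)) * dx i (dx j \<phi>) p))))) \<and>
     \<comment> \<open>(iv) initial datum\<close>
     (\<forall>R. ((\<lambda>t. LINT x : cube R | lebesgue. \<bar>u t x - u0 x\<bar>) \<longlongrightarrow> 0) (at_right 0))"

end

theory Submission
  imports Defs
begin

lemma cube_cbox: "cube R = cbox (\<chi> _. - (R/2)) (\<chi> _. R/2 :: real^'d)"
  unfolding cube_def set_eq_iff mem_box_cart mem_Collect_eq vec_lambda_beta
  by (meson abs_le_iff minus_le_iff)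

lemma ee_shift:
  fixes \<mu> :: "real^'d"
  assumes "\<mu> $ i \<noteq> 0"
  defines "h \<equiv> 1 / (2 * \<bar>\<mu> $ i\<bar>)"
  shows "exp (2*pi*\<i>*complex_of_real (\<mu> \<bullet> (h *\<^sub>R axis i 1 + x))) = - exp (2*pi*\<i>*complex_of_real (\<mu> \<bullet> x))"
proof -
  have "\<mu> \<bullet> (h *\<^sub>R axis i 1 + x) = \<mu> \<bullet> x + h * \<mu> $ i"
    by (simp add: inner_add_right inner_axis)
  moreover have "2*pi*\<i>*complex_of_real (h * \<mu> $ i) = (if \<mu> $ i > 0 then pi * \<i> else - (pi * \<i>))"
    using assms(1) by (auto simp: h_def field_simps)
  ultimately show ?thesis
    by (auto simp: distrib_left exp_add exp_pi_i exp_pi_i' exp_minus)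
qed

lemma norm_ee[simp]: "norm (exp (c * \<i> * complex_of_real t)) = 1" if "c \<in> \<real>" for c
  using that by (auto simp: norm_exp_eq_Re elim!: Reals_cases)

lemma cont_ee: "continuous_on S (\<lambda>x::real^'d. exp (2*pi*\<i>*complex_of_real (\<mu> \<bullet> x)))"
  by (intro continuous_intros)

lemma content_slab:
  fixes a b :: "real^'d"
  assumes "\<And>j. j \<noteq> i \<Longrightarrow> b $ j - a $ j = R" "b $ i - a $ i = h" "0 \<le> h" "0 \<le> R"
  shows "measure lborel (cbox a b) = h * R ^ (CARD('d) - 1)"
proof -
  have ne: "cbox a b \<noteq> {}"
    using assms by (auto simp: interval_ne_empty_cart) (metis diff_ge_0_iff_ge)
  have "measure lborel (cbox a b) = (\<Prod>j\<in>UNIV. b$j - a$j)"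
    using content_cbox_cart[OF ne] by simp
  also have "\<dots> = (b$i - a$i) * (\<Prod>j\<in>UNIV-{i}. b$j - a$j)"
    by (simp add: prod.remove)
  also have "(\<Prod>j\<in>UNIV-{i}. b$j - a$j) = (\<Prod>j\<in>UNIV-{i}. R)"
    using assms(1) by (intro prod.cong) auto
  also have "\<dots> = R ^ (CARD('d) - 1)"
    by (simp add: card_Diff_singleton)
  finally show ?thesis using assms by simp
qed

lemma ee_integral_bound:
  fixes \<mu> :: "real^'d"
  assumes mi: "\<mu> $ i \<noteq> 0" and hR: "1 / (2 * \<bar>\<mu> $ i\<bar>) \<le> R"
  shows "norm (integral (cube R) (\<lambda>x. exp (2*pi*\<i>*complex_of_real (\<mu> \<bullet> x))))
           \<le> 1 / (2 * \<bar>\<mu> $ i\<bar>) * R ^ (CARD('d) - 1)"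
proof -
  define h where "h = 1 / (2 * \<bar>\<mu> $ i\<bar>)"
  have h0: "0 < h" using mi by (simp add: h_def)
  define f where "f = (\<lambda>x::real^'d. exp (2*pi*\<i>*complex_of_real (\<mu> \<bullet> x)))"
  define a where "a = (\<chi> _. - (R/2) :: real^'d)"
  define b where "b = (\<chi> _. R/2 :: real^'d)"
  define v where "v = h *\<^sub>R axis i (1::real)"
  define k where "k = axis i (1::real)"
  have k: "k \<in> Basis" by (simp add: k_def)
  have kx: "x \<bullet> k = x $ i" for x :: "real^'d" by (simp add: k_def inner_axis)
  have fint: "f integrable_on cbox c d" for c d
    unfolding f_def by (intro integrable_continuous cont_ee)
  have fn: "norm (f x) \<le> 1" for x unfolding f_def by simp
  have fshift: "f \<circ> (+) v = (\<lambda>x. - f x)"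
    using ee_shift[OF mi] by (auto simp: f_def v_def h_def)
  define I where "I = integral (cbox a b) f"
  have D: "integral (cbox (a+v) (b+v)) f = - I"
    using integral_shift_cbox_plus[of a b f v] fshift integral_neg[of "cbox a b" f]
    by (simp add: I_def)
  have s1: "I = integral (cbox a b \<inter> {x. x\<bullet>k \<le> a$i + h}) f + integral (cbox a b \<inter> {x. x\<bullet>k \<ge> a$i + h}) f"
    unfolding I_def by (rule integral_split[OF fint k])
  have s2: "-I = integral (cbox (a+v) (b+v) \<inter> {x. x\<bullet>k \<le> b$i}) f + integral (cbox (a+v) (b+v) \<inter> {x. x\<bullet>k \<ge> b$i}) f"
    unfolding D[symmetric] by (rule integral_split[OF fint k])
  have eq: "cbox a b \<inter> {x. x\<bullet>k \<ge> a$i + h} = cbox (a+v) (b+v) \<inter> {x. x\<bullet>k \<le> b$i}"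
  proof (intro set_eqI iffI)
    fix x assume "x \<in> cbox a b \<inter> {x. x\<bullet>k \<ge> a$i + h}"
    hence xj: "\<And>j. -(R/2) \<le> x$j \<and> x$j \<le> R/2" and xi: "a$i + h \<le> x$i"
      by (auto simp: mem_box_cart a_def b_def kx)
    show "x \<in> cbox (a+v) (b+v) \<inter> {x. x\<bullet>k \<le> b$i}"
      unfolding mem_box_cart Int_iff mem_Collect_eq kx
    proof (intro conjI allI)
      fix j
      show "(a+v)$j \<le> x$j" using xj[of j] xi h0 by (cases "j = i") (auto simp: a_def v_def axis_def)
      show "x$j \<le> (b+v)$j" using xj[of j] xi h0 by (cases "j = i") (auto simp: b_def v_def axis_def)
    next
      show "x$i \<le> b$i" using xj[of i] by (simp add: b_def)
    qed
  next
    fix x assume "x \<in> cbox (a+v) (b+v) \<inter> {x. x\<bullet>k \<le> b$i}"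
    hence xj: "\<And>j. (a+v)$j \<le> x$j \<and> x$j \<le> (b+v)$j" and xi: "x$i \<le> b$i"
      by (auto simp: mem_box_cart kx)
    show "x \<in> cbox a b \<inter> {x. x\<bullet>k \<ge> a$i + h}"
      unfolding mem_box_cart Int_iff mem_Collect_eq kx
    proof (intro conjI allI)
      fix j
      show "a$j \<le> x$j" using xj[of j] xi h0 by (cases "j = i") (auto simp: a_def v_def axis_def)
      show "x$j \<le> b$j" using xj[of j] xi h0 by (cases "j = i") (auto simp: b_def v_def axis_def)
    next
      show "a$i + h \<le> x$i" using xj[of i] by (simp add: a_def v_def axis_def)
    qed
  qed
  define b1 where "b1 = (\<chi> j. if j = i then a$i + h else b$j)"
  have e1: "cbox a b \<inter> {x. x\<bullet>k \<le> a$i + h} = cbox a b1"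
  proof (intro set_eqI iffI)
    fix x assume "x \<in> cbox a b \<inter> {x. x\<bullet>k \<le> a$i + h}"
    hence xj: "\<And>j. a$j \<le> x$j \<and> x$j \<le> b$j" and xi: "x$i \<le> a$i + h"
      by (auto simp: mem_box_cart kx)
    show "x \<in> cbox a b1" unfolding mem_box_cart
      using xj xi by (auto simp: b1_def)
  next
    fix x assume "x \<in> cbox a b1"
    hence xj: "\<And>j. a$j \<le> x$j \<and> x$j \<le> b1$j" by (auto simp: mem_box_cart)
    have "a$i + h \<le> b$i" using hR by (simp add: a_def b_def h_def)
    show "x \<in> cbox a b \<inter> {x. x\<bullet>k \<le> a$i + h}"
      unfolding mem_box_cart Int_iff mem_Collect_eq kx
    proof (intro conjI allI)
      fix j
      show "a$j \<le> x$j" using xj[of j] by simp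
      show "x$j \<le> b$j" using xj[of j] \<open>a$i + h \<le> b$i\<close> by (cases "j = i") (auto simp: b1_def)
    next
      show "x$i \<le> a$i + h" using xj[of i] by (simp add: b1_def)
    qed
  qed
  define a2 where "a2 = (\<chi> j. if j = i then b$i else a$j)"
  have e2: "cbox (a+v) (b+v) \<inter> {x. x\<bullet>k \<ge> b$i} = cbox a2 (b+v)"
  proof (intro set_eqI iffI)
    fix x assume "x \<in> cbox (a+v) (b+v) \<inter> {x. x\<bullet>k \<ge> b$i}"
    hence xj: "\<And>j. (a+v)$j \<le> x$j \<and> x$j \<le> (b+v)$j" and xi: "b$i \<le> x$i"
      by (auto simp: mem_box_cart kx)
    show "x \<in> cbox a2 (b+v)" unfolding mem_box_cart
    proof (intro allI conjI)
      fix j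
      show "a2$j \<le> x$j" using xj[of j] xi h0 by (cases "j = i") (auto simp: a2_def a_def v_def axis_def)
      show "x$j \<le> (b+v)$j" using xj[of j] by simp
    qed
  next
    fix x assume "x \<in> cbox a2 (b+v)"
    hence xj: "\<And>j. a2$j \<le> x$j \<and> x$j \<le> (b+v)$j" by (auto simp: mem_box_cart)
    have "(a+v)$i \<le> b$i" using hR by (simp add: a_def b_def h_def v_def axis_def)
    show "x \<in> cbox (a+v) (b+v) \<inter> {x. x\<bullet>k \<ge> b$i}"
      unfolding mem_box_cart Int_iff mem_Collect_eq kx
    proof (intro conjI allI)
      fix j
      show "(a+v)$j \<le> x$j" using xj[of j] \<open>(a+v)$i \<le> b$i\<close> h0
        by (cases "j = i") (auto simp: a2_def a_def v_def axis_def)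
      show "x$j \<le> (b+v)$j" using xj[of j] by simp
    next
      show "b$i \<le> x$i" using xj[of i] by (simp add: a2_def)
    qed
  qed
  have R0: "0 \<le> R" using h0 hR unfolding h_def by linarith
  have c1: "measure lborel (cbox a b1) = h * R ^ (CARD('d) - 1)"
    by (rule content_slab[where i=i]) (use h0 R0 in \<open>auto simp: a_def b_def b1_def\<close>)
  have c2: "measure lborel (cbox a2 (b+v)) = h * R ^ (CARD('d) - 1)"
    by (rule content_slab[where i=i]) (use h0 R0 in \<open>auto simp: a2_def a_def b_def v_def axis_def\<close>)
  have n1: "norm (integral (cbox a b1) f) \<le> h * R ^ (CARD('d) - 1)"
    using has_integral_bound[of 1 f _ a b1] fint[of a b1] fn c1
    by (simp add: has_integral_integral)
  have n2: "norm (integral (cbox a2 (b+v)) f) \<le> h * R ^ (CARD('d) - 1)"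
    using has_integral_bound[of 1 f _ a2 "b+v"] fint[of a2 "b+v"] fn c2
    by (simp add: has_integral_integral)
  define X where "X = integral (cbox a b \<inter> {x. x\<bullet>k \<ge> a$i + h}) f"
  define A where "A = integral (cbox a b1) f"
  define B where "B = integral (cbox a2 (b+v)) f"
  have h1: "A + X = I" using s1 e1 by (simp add: A_def X_def)
  have h2: "X + B = -I" using s2 e2 eq by (simp add: B_def X_def)
  have "2 * I = I - (-I)" by simp
  also have "\<dots> = (A + X) - (X + B)" unfolding h1 h2 ..
  also have "\<dots> = A - B" by simp
  finally have "2 * I = integral (cbox a b1) f - integral (cbox a2 (b+v)) f"
    by (simp add: A_def B_def)
  hence "norm (2 * I) = norm (integral (cbox a b1) f - integral (cbox a2 (b+v)) f)" by simp
  also have "\<dots> \<le> 2 * (h * R ^ (CARD('d) - 1))"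
    using n1 n2 norm_triangle_ineq4[of "integral (cbox a b1) f" "integral (cbox a2 (b+v)) f"] by linarith
  finally have "norm (2 * I) \<le> 2 * (h * R ^ (CARD('d) - 1))" .
  hence "norm I \<le> h * R ^ (CARD('d) - 1)"
    by (simp add: norm_mult)
  moreover have "integral (cube R) f = I"
    by (simp add: I_def cube_cbox a_def b_def)
  ultimately show ?thesis by (simp add: f_def h_def)
qed

definition avgc :: "real \<Rightarrow> (real^'d \<Rightarrow> complex) \<Rightarrow> complex" where
  "avgc R g = inverse (complex_of_real (R ^ CARD('d))) * (LINT x : cube R | lebesgue. g x)"

definition avgn :: "real \<Rightarrow> (real^'d \<Rightarrow> complex) \<Rightarrow> real" where
  "avgn R g = inverse (R ^ CARD('d)) * (LINT x : cube R | lebesgue. norm (g x))"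

definition tp :: "(real^'d) set \<Rightarrow> (real^'d \<Rightarrow> complex) \<Rightarrow> real^'d \<Rightarrow> complex" where
  "tp L c x = (\<Sum>l\<in>L. c l * exp (2*pi*\<i>*complex_of_real (l \<bullet> x)))"

lemma cont_set_integrable:
  fixes \<phi> :: "real^'d \<Rightarrow> complex"
  assumes "continuous_on UNIV \<phi>"
  shows "set_integrable lebesgue (cube R) \<phi>"
  "(LINT x : cube R | lebesgue. \<phi> x) = integral (cube R) \<phi>"
proof -
  show *: "set_integrable lebesgue (cube R) \<phi>"
    unfolding cube_cbox absolutely_integrable_on_def[symmetric]
    by (rule absolutely_integrable_continuous) (rule continuous_on_subset[OF assms], simp)
  show "(LINT x : cube R | lebesgue. \<phi> x) = integral (cube R) \<phi>"
    by (rule set_lebesgue_integral_eq_integral(2)[OF *])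
qed

lemma cont_meas:
  fixes \<phi> :: "real^'d \<Rightarrow> complex"
  assumes "continuous_on UNIV \<phi>"
  shows "\<phi> \<in> borel_measurable lebesgue"
  using continuous_imp_measurable_on_sets_lebesgue[OF assms, of] by simp

lemma ee_avg0:
  fixes \<mu> :: "real^'d"
  assumes "\<mu> \<noteq> 0"
  shows "((\<lambda>R. avgc R (\<lambda>x. exp (2*pi*\<i>*complex_of_real (\<mu> \<bullet> x)))) \<longlongrightarrow> 0) at_top"
proof -
  obtain i where mi: "\<mu> $ i \<noteq> 0" using assms by (metis vec_eq_iff zero_index)
  define h where "h = 1 / (2 * \<bar>\<mu> $ i\<bar>)"
  have h0: "0 < h" using mi by (simp add: h_def)
  show ?thesis
  proof (rule Lim_null_comparison)
    show "((\<lambda>R. h / R) \<longlongrightarrow> 0) at_top"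
      by (intro tendsto_divide_0[OF tendsto_const] filterlim_at_top_imp_at_infinity filterlim_ident)
    have "eventually (\<lambda>R. R \<ge> max h 1) at_top" by (rule eventually_ge_at_top)
    thus "eventually (\<lambda>R. norm (avgc R (\<lambda>x. exp (2*pi*\<i>*complex_of_real (\<mu> \<bullet> x)))) \<le> h / R) at_top"
    proof eventually_elim
      case (elim R)
      hence R0: "R > 0" and hR: "h \<le> R" by auto
      have "norm (avgc R (\<lambda>x. exp (2*pi*\<i>*complex_of_real (\<mu> \<bullet> x))))
          = inverse (R ^ CARD('d)) * norm (integral (cube R) (\<lambda>x. exp (2*pi*\<i>*complex_of_real (\<mu> \<bullet> x))))"
        unfolding avgc_def cont_set_integrable(2)[OF cont_ee] using R0
        by (simp add: norm_mult norm_inverse norm_power abs_of_pos)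
      also have "\<dots> \<le> inverse (R ^ CARD('d)) * (h * R ^ (CARD('d) - 1))"
        using ee_integral_bound[OF mi, of R] hR R0 by (intro mult_left_mono) (auto simp: h_def)
      also have "R ^ CARD('d) = R * R ^ (CARD('d) - 1)"
        by (metis Suc_pred' power_Suc zero_less_card_finite)
      also have "inverse (R * R ^ (CARD('d) - 1)) * (h * R ^ (CARD('d) - 1)) = h / R"
        using R0 by (simp add: field_simps)
      finally show ?case .
    qed
  qed
qed

lemma tp_avg0:
  fixes lam :: "real^'d"
  assumes "finite L" "lam \<notin> L"
  shows "((\<lambda>R. avgc R (\<lambda>x. exp (- 2*pi*\<i>*complex_of_real (lam \<bullet> x)) * tp L c x)) \<longlongrightarrow> 0) at_top"
proof -
  have pw: "exp (- 2*pi*\<i>*complex_of_real (lam \<bullet> x)) * tp L c x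
      = (\<Sum>l\<in>L. c l * exp (2*pi*\<i>*complex_of_real ((l - lam) \<bullet> x)))" for x
    unfolding tp_def sum_distrib_left
    by (intro sum.cong refl) (simp add: inner_diff_left exp_diff[symmetric] exp_minus field_simps
        flip: exp_add)
  have "avgc R (\<lambda>x. exp (- 2*pi*\<i>*complex_of_real (lam \<bullet> x)) * tp L c x)
      = (\<Sum>l\<in>L. c l * avgc R (\<lambda>x. exp (2*pi*\<i>*complex_of_real ((l - lam) \<bullet> x))))" for R
  proof -
    have "avgc R (\<lambda>x. exp (- 2*pi*\<i>*complex_of_real (lam \<bullet> x)) * tp L c x)
       = inverse (complex_of_real (R ^ CARD('d))) * integral (cube R) (\<lambda>x. \<Sum>l\<in>L. c l * exp (2*pi*\<i>*complex_of_real ((l - lam) \<bullet> x)))"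
      unfolding avgc_def pw
      by (subst cont_set_integrable(2)) (intro continuous_intros, rule refl)
    also have "\<dots> = inverse (complex_of_real (R ^ CARD('d))) * (\<Sum>l\<in>L. c l * integral (cube R) (\<lambda>x. exp (2*pi*\<i>*complex_of_real ((l - lam) \<bullet> x))))"
      by (subst integral_sum) (auto simp: assms cube_cbox intro!: integrable_continuous continuous_intros)
    also have "\<dots> = (\<Sum>l\<in>L. c l * avgc R (\<lambda>x. exp (2*pi*\<i>*complex_of_real ((l - lam) \<bullet> x))))"
      unfolding avgc_def cont_set_integrable(2)[OF cont_ee] sum_distrib_left by (simp add: ac_simps)
    finally show ?thesis .
  qed
  moreover have "((\<lambda>R. \<Sum>l\<in>L. c l * avgc R (\<lambda>x. exp (2*pi*\<i>*complex_of_real ((l - lam) \<bullet> x)))) \<longlongrightarrow> 0) at_top"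
  proof -
    have "((\<lambda>R. \<Sum>l\<in>L. c l * avgc R (\<lambda>x. exp (2*pi*\<i>*complex_of_real ((l - lam) \<bullet> x)))) \<longlongrightarrow> (\<Sum>l\<in>L. c l * 0)) at_top"
      using assms by (intro tendsto_sum tendsto_mult tendsto_const ee_avg0) auto
    thus ?thesis by simp
  qed
  ultimately show ?thesis by simp
qed

lemma mult_set_integrable:
  fixes g E :: "real^'d \<Rightarrow> complex"
  assumes gi: "set_integrable lebesgue S g" and E: "continuous_on UNIV E" and En: "\<And>x. norm (E x) = 1"
  shows "set_integrable lebesgue S (\<lambda>x. E x * g x)"
proof (rule set_integrable_bound[OF gi])
  have "(\<lambda>x. indicator S x *\<^sub>R g x) \<in> borel_measurable lebesgue"
    using gi unfolding set_integrable_def by (rule borel_measurable_integrable)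
  hence "(\<lambda>x. E x * (indicator S x *\<^sub>R g x)) \<in> borel_measurable lebesgue"
    by (intro borel_measurable_times cont_meas[OF E])
  thus "set_borel_measurable lebesgue S (\<lambda>x. E x * g x)"
    unfolding set_borel_measurable_def by (simp add: mult_scaleR_right)
  show "AE x in lebesgue. x \<in> S \<longrightarrow> norm (E x * g x) \<le> norm (g x)"
    by (simp add: norm_mult En)
qed

lemma key:
  fixes g :: "real^'d \<Rightarrow> complex" and lam :: "real^'d"
  assumes gi: "\<And>R. set_integrable lebesgue (cube R) g"
  and approx: "\<And>e. e > 0 \<Longrightarrow> \<exists>L c. finite L \<and> lam \<notin> L \<and> eventually (\<lambda>R. avgn R (\<lambda>x. g x - tp L c x) < e) at_top"
  shows "((\<lambda>R. avgc R (\<lambda>x. exp (- 2*pi*\<i>*complex_of_real (lam \<bullet> x)) * g x)) \<longlongrightarrow> 0) at_top"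
proof (rule tendstoI)
  fix e :: real assume e: "e > 0"
  define E where "E = (\<lambda>x::real^'d. exp (- 2*pi*\<i>*complex_of_real (lam \<bullet> x)))"
  have Ec: "continuous_on UNIV E" unfolding E_def by (intro continuous_intros)
  have En: "norm (E x) = 1" for x unfolding E_def by simp
  obtain L c where L: "finite L" "lam \<notin> L" and ev1: "eventually (\<lambda>R. avgn R (\<lambda>x. g x - tp L c x) < e/2) at_top"
    using approx[of "e/2"] e by auto
  have tpc: "continuous_on UNIV (tp L c)" unfolding tp_def by (intro continuous_intros)
  have "((\<lambda>R. avgc R (\<lambda>x. E x * tp L c x)) \<longlongrightarrow> 0) at_top"
    unfolding E_def by (rule tp_avg0[OF L])
  hence ev2: "eventually (\<lambda>R. dist (avgc R (\<lambda>x. E x * tp L c x)) 0 < e/2) at_top"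
    using e by (intro tendstoD) auto
  have ev3: "eventually (\<lambda>R. R > (0::real)) at_top" by (rule eventually_gt_at_top)
  show "eventually (\<lambda>R. dist (avgc R (\<lambda>x. exp (- 2*pi*\<i>*complex_of_real (lam \<bullet> x)) * g x)) 0 < e) at_top"
    using ev1 ev2 ev3
  proof eventually_elim
    case (elim R)
    have i1: "set_integrable lebesgue (cube R) (\<lambda>x. E x * g x)"
      by (rule mult_set_integrable[OF gi Ec En])
    have i2: "set_integrable lebesgue (cube R) (\<lambda>x. E x * tp L c x)"
      by (rule cont_set_integrable(1)) (intro continuous_intros Ec tpc)
    have i3: "set_integrable lebesgue (cube R) (\<lambda>x. E x * g x - E x * tp L c x)"
      by (rule set_integral_diff(1)[OF i1 i2])
    have "(LINT x : cube R | lebesgue. E x * g x) =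
          (LINT x : cube R | lebesgue. E x * g x - E x * tp L c x) + (LINT x : cube R | lebesgue. E x * tp L c x)"
      using set_integral_diff(2)[OF i1 i2] by simp
    hence split: "avgc R (\<lambda>x. E x * g x) = avgc R (\<lambda>x. E x * g x - E x * tp L c x) + avgc R (\<lambda>x. E x * tp L c x)"
      unfolding avgc_def by (simp add: distrib_left)
    have "norm (avgc R (\<lambda>x. E x * g x - E x * tp L c x))
        = inverse (R ^ CARD('d)) * norm (LINT x : cube R | lebesgue. E x * g x - E x * tp L c x)"
      unfolding avgc_def using elim by (simp add: norm_mult norm_inverse norm_power abs_of_pos)
    also have "\<dots> \<le> inverse (R ^ CARD('d)) * (LINT x : cube R | lebesgue. norm (E x * g x - E x * tp L c x))"
      using elim by (intro mult_left_mono set_integral_norm_bound i3) auto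
    also have "(LINT x : cube R | lebesgue. norm (E x * g x - E x * tp L c x)) = (LINT x : cube R | lebesgue. norm (g x - tp L c x))"
      by (simp add: right_diff_distrib[symmetric] norm_mult En)
    finally have "norm (avgc R (\<lambda>x. E x * g x - E x * tp L c x)) \<le> avgn R (\<lambda>x. g x - tp L c x)"
      by (simp add: avgn_def)
    hence "norm (avgc R (\<lambda>x. E x * g x)) < e"
      using split elim norm_triangle_ineq[of "avgc R (\<lambda>x. E x * g x - E x * tp L c x)" "avgc R (\<lambda>x. E x * tp L c x)"]
      by simp
    thus ?case by (simp add: E_def)
  qed
qed

lemma avgn_tri:
  fixes a b c :: "real^'d \<Rightarrow> complex"
  assumes ia: "set_integrable lebesgue (cube R) a" and ib: "set_integrable lebesgue (cube R) b"
    and ic: "set_integrable lebesgue (cube R) c" and R: "R > 0"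
  shows "avgn R (\<lambda>x. a x - c x) \<le> avgn R (\<lambda>x. a x - b x) + avgn R (\<lambda>x. b x - c x)"
proof -
  have i1: "set_integrable lebesgue (cube R) (\<lambda>x. norm (a x - b x))"
    by (intro set_integrable_norm set_integral_diff(1) ia ib)
  have i2: "set_integrable lebesgue (cube R) (\<lambda>x. norm (b x - c x))"
    by (intro set_integrable_norm set_integral_diff(1) ic ib)
  have i3: "set_integrable lebesgue (cube R) (\<lambda>x. norm (a x - c x))"
    by (intro set_integrable_norm set_integral_diff(1) ia ic)
  have "(LINT x : cube R | lebesgue. norm (a x - c x)) \<le> (LINT x : cube R | lebesgue. norm (a x - b x) + norm (b x - c x))"
    by (rule set_integral_mono[OF i3 set_integral_add(1)[OF i1 i2]])
       (rule norm_diff_triangle_le[OF order_refl order_refl])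
  also have "\<dots> = (LINT x : cube R | lebesgue. norm (a x - b x)) + (LINT x : cube R | lebesgue. norm (b x - c x))"
    by (rule set_integral_add(2)[OF i1 i2])
  finally show ?thesis
    unfolding avgn_def using R by (simp add: distrib_left[symmetric] mult_left_mono)
qed

lemma N1_ev:
  fixes g :: "real^'d \<Rightarrow> complex"
  assumes "N1 g < ereal e"
  shows "eventually (\<lambda>R. avgn R g < e) at_top"
proof -
  have "Limsup at_top (\<lambda>R. ereal (avgn R g)) < ereal e"
    using assms by (simp add: N1_def avgn_def)
  from Limsup_lessD[OF this] show ?thesis
    by (rule eventually_mono) simp
qed

theorem lemma2p6:
  fixes f :: "real \<Rightarrow> real^'d"
    and A :: "real \<Rightarrow> real^'d^'d"
    and sig beta :: "'d \<Rightarrow> 'k::finite \<Rightarrow> real \<Rightarrow> real"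
    and u0 :: "real^'d \<Rightarrow> real"
    and u :: "real \<Rightarrow> real^'d \<Rightarrow> real"
  assumes f_smooth: "smooth f"
    and A_smooth: "smooth A"
    and A_sym: "\<And>s i j. A s $ i $ j = A s $ j $ i"
    and A_deriv_nonneg: "\<And>s \<xi>. 0 \<le> (\<Sum>i\<in>UNIV. \<Sum>j\<in>UNIV. vector_derivative A (at s) $ i $ j * \<xi> $ i * \<xi> $ j)"
    and sig_smooth: "\<And>i k. smooth (sig i k)"
    and a_eq: "\<And>s i j. vector_derivative A (at s) $ i $ j = (\<Sum>k\<in>UNIV. sig i k s * sig j k s)"
    and beta_deriv: "\<And>i k s. (beta i k has_real_derivative sig i k s) (at s)"
    and u0_meas: "u0 \<in> borel_measurable lebesgue"
    and u0_bdd: "\<exists>M. AE x in lebesgue. \<bar>u0 x\<bar> \<le> M"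
    and u0_BAP: "(\<lambda>x. complex_of_real (u0 x)) \<in> BAP"
    and u_entropy: "entropy_solution f A sig beta u0 u"
    and u_BAP: "\<And>t. t \<ge> 0 \<Longrightarrow> (\<lambda>x. complex_of_real (u t x)) \<in> BAP"
    and u_cont: "\<And>t e. t \<ge> 0 \<Longrightarrow> e > 0 \<Longrightarrow> \<exists>\<delta>>0. \<forall>s\<ge>0. \<bar>s - t\<bar> < \<delta> \<longrightarrow>
                   N1 (\<lambda>x. complex_of_real (u s x - u t x)) < ereal e"
  shows "countable {lam::real^'d. \<exists>t\<ge>0.
           Me (\<lambda>x. exp (- 2 * pi * \<i> * complex_of_real (lam \<bullet> x)) * complex_of_real (u t x)) \<noteq> 0}"
proof -
  define ug where "ug t = (\<lambda>x. complex_of_real (u t x))" for t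
  have ugi: "set_integrable lebesgue (cube R) (ug t)" if "t \<ge> 0" for t R
    using u_BAP[OF that] by (simp add: BAP_def ug_def)
  have ex: "\<exists>Lc. finite (fst Lc) \<and> N1 (\<lambda>x. ug t x - tp (fst Lc) (snd Lc) x) < ereal e"
    if "t \<ge> 0" "e > 0" for t e
  proof -
    from u_BAP[OF that(1)] that(2) obtain p where p: "trig_poly p" "N1 (\<lambda>x. ug t x - p x) < ereal e"
      unfolding BAP_def ug_def by auto
    then obtain L c where L: "finite L" and pe: "p = (\<lambda>x. \<Sum>l\<in>L. c l * exp (2 * pi * \<i> * complex_of_real (l \<bullet> x)))"
      unfolding trig_poly_def by auto
    have "p = tp L c" by (simp add: pe fun_eq_iff tp_def)
    thus ?thesis using L p by (intro exI[of _ "(L, c)"]) auto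
  qed
  define Lc where "Lc t n = (SOME Lc. finite (fst Lc) \<and>
      N1 (\<lambda>x. ug t x - tp (fst Lc) (snd Lc) x) < ereal (inverse (real (Suc n))))" for t n
  have Lc: "finite (fst (Lc t n)) \<and> N1 (\<lambda>x. ug t x - tp (fst (Lc t n)) (snd (Lc t n)) x) < ereal (inverse (real (Suc n)))"
    if "t \<ge> 0" for t n
    unfolding Lc_def by (rule someI_ex) (rule ex, use that in auto)
  define S where "S = (\<Union>t\<in>\<rat> \<inter> {0..}. \<Union>n. fst (Lc t n))"
  have cS: "countable S"
    unfolding S_def
  proof (intro countable_UN)
    show "countable (\<rat> \<inter> {0::real..})" by (rule countable_subset[OF Int_lower1 countable_rat])
    show "countable (fst (Lc t n))" if "t \<in> \<rat> \<inter> {0..}" for t n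
      using Lc[of t n] that by (auto intro: countable_finite)
  qed simp
  have main: "Me (\<lambda>x. exp (- 2 * pi * \<i> * complex_of_real (lam \<bullet> x)) * complex_of_real (u t x)) = 0"
    if t0: "t \<ge> 0" and lamS: "lam \<notin> S" for t and lam :: "real^'d"
  proof -
    have "((\<lambda>R. avgc R (\<lambda>x. exp (- 2*pi*\<i>*complex_of_real (lam \<bullet> x)) * ug t x)) \<longlongrightarrow> 0) at_top"
    proof (rule key[OF ugi[OF t0]])
      fix e :: real assume e: "e > 0"
      obtain \<delta> where \<delta>: "\<delta> > 0" "\<forall>s\<ge>0. \<bar>s - t\<bar> < \<delta> \<longrightarrow> N1 (\<lambda>x. complex_of_real (u s x - u t x)) < ereal (e/2)"
        using u_cont[OF t0, of "e/2"] e by auto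
      obtain q where q: "q \<in> \<rat>" "t < q" "q < t + \<delta>"
        using Rats_dense_in_real[of t "t+\<delta>"] \<delta> by auto
      have q0: "q \<ge> 0" using q t0 by linarith
      obtain n where n: "inverse (real (Suc n)) < e/2"
        using reals_Archimedean[of "e/2"] e by auto
      define L where "L = fst (Lc q n)"
      define c where "c = snd (Lc q n)"
      have fin: "finite L" and N1q: "N1 (\<lambda>x. ug q x - tp L c x) < ereal (inverse (real (Suc n)))"
        using Lc[OF q0, of n] by (auto simp: L_def c_def)
      have lamL: "lam \<notin> L" using lamS q q0 unfolding S_def L_def by auto
      have ev1: "eventually (\<lambda>R. avgn R (\<lambda>x. ug q x - tp L c x) < inverse (real (Suc n))) at_top"
        by (rule N1_ev[OF N1q])
      have ev2: "eventually (\<lambda>R. avgn R (\<lambda>x. complex_of_real (u q x - u t x)) < e/2) at_top"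
        by (rule N1_ev) (use \<delta> q q0 in auto)
      have ev3: "eventually (\<lambda>R. R > (0::real)) at_top" by (rule eventually_gt_at_top)
      have tpc: "continuous_on UNIV (tp L c)" unfolding tp_def by (intro continuous_intros)
      have "eventually (\<lambda>R. avgn R (\<lambda>x. ug t x - tp L c x) < e) at_top"
        using ev1 ev2 ev3
      proof eventually_elim
        case (elim R)
        have "avgn R (\<lambda>x. ug t x - tp L c x) \<le> avgn R (\<lambda>x. ug t x - ug q x) + avgn R (\<lambda>x. ug q x - tp L c x)"
          by (rule avgn_tri[OF ugi[OF t0] ugi[OF q0] cont_set_integrable(1)[OF tpc] elim(3)])
        moreover have "norm (ug t x - ug q x) = norm (complex_of_real (u q x - u t x))" for x
          by (metis norm_minus_commute of_real_diff ug_def)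
        hence "avgn R (\<lambda>x. ug t x - ug q x) = avgn R (\<lambda>x. complex_of_real (u q x - u t x))"
          unfolding avgn_def by simp
        ultimately show ?case using elim n by linarith
      qed
      thus "\<exists>L c. finite L \<and> lam \<notin> L \<and> eventually (\<lambda>R. avgn R (\<lambda>x. ug t x - tp L c x) < e) at_top"
        using fin lamL by blast
    qed
    hence "Lim at_top (\<lambda>R. avgc R (\<lambda>x. exp (- 2*pi*\<i>*complex_of_real (lam \<bullet> x)) * ug t x)) = 0"
      by (intro tendsto_Lim) auto
    thus ?thesis by (simp add: Me_def avgc_def ug_def)
  qed
  have "{lam::real^'d. \<exists>t\<ge>0.
           Me (\<lambda>x. exp (- 2 * pi * \<i> * complex_of_real (lam \<bullet> x)) * complex_of_real (u t x)) \<noteq> 0} \<subseteq> S"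
    using main by blast
  thus ?thesis using cS countable_subset by blast
qed

end
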